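(* Let $Y\subset\mathbb C^n$ be a $k$-dimensional subspace with basis $b^i=(b^i_1,\dots,b^i_n)$, $i=1,\dots,k$, and $a\in(\mathbb C^\times)^n$; assume that for every $j$, $Y\not\subset\{q_j=0\}$ and $Y^\perp\not\subset\{p_j=0\}$. Let $I=\{i_1,\dots,i_k\}$ and $I'=\{i'_1,\dots,i'_k\}$ be $k$-element subsets of $\{1,\dots,n\}$ (listed increasingly) such that $q_I$ and $q_{I'}$ each form a coordinate system on $Y$. Consider the ordered coordinate systems $(q_I,p_{\bar I})$ and $(q_{I'},p_{\bar I'})$ on $L_{Y,a}$, and let $\mathrm{Jac}_{I,\bar I'}(q_I,p_{\bar I})$ be the Jacobian of the change expressing the second system in terms of the first. Then $$\mathrm{Jac}_{I,\bar I'}(q_I,p_{\bar I})=\big(d_{i'_1,\dots,i'_k}/d_{i_1,\dots,i_k}\big)^2.$$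
   Context: $\mathbb C^n$ has coordinates $q_1,\dots,q_n$, $(\mathbb C^n)^*$ has dual coordinates $p_1,\dots,p_n$; $Y^\perp$ is the annihilator of $Y$. $r_a(q,p)=(q_1+a_1/p_1,\dots,q_n+a_n/p_n,p)$ (defined where all $p_j\ne0$) and $L_{Y,a}=r_a(Y\times Y^\perp)$, the variety in $\mathbb C^n\times\{\prod p_j\ne0\}$ given by $\sum_j\alpha_jp_j=0$ ($\alpha\in Y$), $\sum_j\beta_j(q_j-a_j/p_j)=0$ ($\beta\in Y^\perp$). For a $k$-subset $I\subset\{1,\dots,n\}$, $\bar I$ is its complement, $q_I=\{q_i\}_{i\in I}$, $p_{\bar I}=\{p_j\}_{j\in\bar I}$; when $q_I$ are coordinates on $Y$, $(q_I,p_{\bar I})$ are coordinates on $L_{Y,a}$, and these functions are ordered by increasing index (e.g. for $k=3,n=6,I=\{1,3,6\}$ the order is $q_1,p_2,q_3,p_4,p_5,q_6$). $d_{i_1,\dots,i_k}=\det_{i,l=1}^k(b^i_{i_l})$. *)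

theory Defs
  imports "HOL-Analysis.Derivative" "Jordan_Normal_Form.Determinant"
begin

text \<open>Vectors in C^n (and (C^n)^*) are functions nat => complex, indices 0..n-1
  (the paper's index j corresponds to j-1 here); components with index >= n are 0.\<close>

definition Ysp :: "nat \<Rightarrow> nat \<Rightarrow> (nat \<Rightarrow> nat \<Rightarrow> complex) \<Rightarrow> (nat \<Rightarrow> complex) set" where
  "Ysp n k b = {y. \<exists>c. y = (\<lambda>j. if j < n then (\<Sum>i<k. c i * b i j) else 0)}"

definition annih :: "nat \<Rightarrow> (nat \<Rightarrow> complex) set \<Rightarrow> (nat \<Rightarrow> complex) set" where
  "annih n Y = {p. (\<forall>j\<ge>n. p j = 0) \<and> (\<forall>y\<in>Y. (\<Sum>j<n. y j * p j) = 0)}"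

definition r_map :: "nat \<Rightarrow> (nat \<Rightarrow> complex) \<Rightarrow> (nat \<Rightarrow> complex) \<times> (nat \<Rightarrow> complex)
     \<Rightarrow> (nat \<Rightarrow> complex) \<times> (nat \<Rightarrow> complex)" where
  "r_map n a qp = ((\<lambda>j. if j < n then fst qp j + a j / snd qp j else 0), snd qp)"

definition Lset :: "nat \<Rightarrow> (nat \<Rightarrow> complex) \<Rightarrow> (nat \<Rightarrow> complex) set
     \<Rightarrow> ((nat \<Rightarrow> complex) \<times> (nat \<Rightarrow> complex)) set" where
  "Lset n a Y = r_map n a ` {(q, p). q \<in> Y \<and> p \<in> annih n Y \<and> (\<forall>j<n. p j \<noteq> 0)}"

definition is_coord_system :: "nat \<Rightarrow> (nat \<Rightarrow> complex) set \<Rightarrow> nat set \<Rightarrow> bool" where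
  "is_coord_system n Y I \<longleftrightarrow> I \<subseteq> {..<n} \<and> (\<forall>z. \<exists>!y. y \<in> Y \<and> (\<forall>i\<in>I. y i = z i))"

definition coordI :: "nat set \<Rightarrow> (nat \<Rightarrow> complex) \<times> (nat \<Rightarrow> complex) \<Rightarrow> (nat \<Rightarrow> complex)" where
  "coordI I qp = (\<lambda>j. if j \<in> I then fst qp j else snd qp j)"

definition coord_change :: "nat \<Rightarrow> (nat \<Rightarrow> complex) \<Rightarrow> (nat \<Rightarrow> complex) set \<Rightarrow> nat set \<Rightarrow> nat set
     \<Rightarrow> (nat \<Rightarrow> complex) \<Rightarrow> (nat \<Rightarrow> complex)" where
  "coord_change n a Y I I' x = coordI I' (THE z. z \<in> Lset n a Y \<and> coordI I z = x)"

definition jac :: "nat \<Rightarrow> ((nat \<Rightarrow> complex) \<Rightarrow> (nat \<Rightarrow> complex)) \<Rightarrow> (nat \<Rightarrow> complex) \<Rightarrow> complex" where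
  "jac n F x = Determinant.det (mat n n (\<lambda>(i, j). deriv (\<lambda>t. F (x(j := t)) i) (x j)))"

definition dminor :: "nat \<Rightarrow> (nat \<Rightarrow> nat \<Rightarrow> complex) \<Rightarrow> nat set \<Rightarrow> complex" where
  "dminor k b I = Determinant.det (mat k k (\<lambda>(i, l). b i (sorted_list_of_set I ! l)))"

end

theory Submission
  imports Defs
begin

lemma det_id_outside:
  fixes A :: "'a::comm_ring_1 mat"
  assumes A: "A \<in> carrier_mat n n" and K: "K \<subseteq> {0..<n}"
    and idr: "\<And>r c. r < n \<Longrightarrow> c < n \<Longrightarrow> r \<notin> K \<Longrightarrow> A $$ (r,c) = (if r = c then 1 else 0)"
  shows "det A = (\<Sum>p\<in>{p. p permutes K}. signof p * (\<Prod>r\<in>K. A $$ (r, p r)))"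
proof -
  have "det A = (\<Sum> p \<in> {p. p permutes {0 ..< n}}. signof p * (\<Prod> i = 0 ..< n. A $$ (i, p i)))"
    using det_def'[OF A] .
  also have "\<dots> = (\<Sum>p\<in>{p. p permutes K}. signof p * (\<Prod>r\<in>K. A $$ (r, p r)))"
  proof (rule sum.mono_neutral_cong_right)
    show "finite {p. p permutes {0..<n}}" by (simp add: finite_permutations)
    show "{p. p permutes K} \<subseteq> {p. p permutes {0..<n}}" using K permutes_subset by blast
    show "\<forall>p\<in>{p. p permutes {0..<n}} - {p. p permutes K}. signof p * (\<Prod>i = 0..<n. A $$ (i, p i)) = 0"
    proof
      fix p assume p: "p \<in> {p. p permutes {0..<n}} - {p. p permutes K}"
      from p have pn: "p permutes {0..<n}" and npK: "\<not> p permutes K" by auto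
      have "\<exists>r. r \<notin> K \<and> p r \<noteq> r"
      proof (rule ccontr)
        assume "\<not> ?thesis"
        hence "\<forall>r. r \<notin> K \<longrightarrow> p r = r" by auto
        moreover have "\<forall>y. \<exists>!x. p x = y" using pn unfolding permutes_def by auto
        ultimately have "p permutes K" unfolding permutes_def by auto
        with npK show False by auto
      qed
      then obtain r where r: "r \<notin> K" "p r \<noteq> r" by auto
      have rn: "r < n" using r pn unfolding permutes_def by auto
      have prn: "p r < n" using rn pn permutes_in_image by fastforce
      have "A $$ (r, p r) = 0" using idr[OF rn prn r(1)] r(2) by auto
      hence "(\<Prod>i = 0..<n. A $$ (i, p i)) = 0"
        using rn by (intro prod_zero) auto
      thus "signof p * (\<Prod>i = 0..<n. A $$ (i, p i)) = 0" by simp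
    qed
    show "signof p * (\<Prod>i = 0..<n. A $$ (i, p i)) = signof p * (\<Prod>r\<in>K. A $$ (r, p r))"
      if p: "p \<in> {p. p permutes K}" for p
    proof -
      have "(\<Prod>i = 0..<n. A $$ (i, p i)) = (\<Prod>r\<in>K. A $$ (r, p r))"
      proof (rule prod.mono_neutral_right)
        show "finite {0..<n}" by simp
        show "K \<subseteq> {0..<n}" by fact
        show "\<forall>i\<in>{0..<n} - K. A $$ (i, p i) = 1"
          using p idr unfolding permutes_def by auto
      qed
      thus ?thesis by simp
    qed
  qed
  finally show ?thesis .
qed

lemma det_id_two_rows:
  fixes A :: "'a::comm_ring_1 mat"
  assumes A: "A \<in> carrier_mat n n" and ij: "i < n" "j < n" "i \<noteq> j"
    and idr: "\<And>r c. r < n \<Longrightarrow> c < n \<Longrightarrow> r \<noteq> i \<Longrightarrow> r \<noteq> j \<Longrightarrow> A $$ (r,c) = (if r = c then 1 else 0)"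
  shows "det A = A $$ (i,i) * A $$ (j,j) - A $$ (i,j) * A $$ (j,i)"
proof -
  have P: "{p. p permutes {i,j}} = {id, Transposition.transpose i j}"
  proof (intro equalityI subsetI)
    fix p assume "p \<in> {p. p permutes {i,j}}"
    hence p: "p permutes {i,j}" by auto
    have pi: "p i \<in> {i,j}" and pj: "p j \<in> {i,j}" using permutes_in_image[OF p] by auto
    have inj: "p i \<noteq> p j" using p ij(3) by (metis permutes_inj injD)
    have out: "\<And>x. x \<notin> {i,j} \<Longrightarrow> p x = x" using p unfolding permutes_def by auto
    show "p \<in> {id, Transposition.transpose i j}"
    proof (cases "p i = i")
      case True
      hence "p j = j" using pj inj by auto
      hence "p = id" using True out by (intro ext) (metis id_apply insertE singletonD)
      thus ?thesis by simp
    next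
      case False
      hence a: "p i = j" using pi by auto
      hence "p j = i" using pj inj by auto
      have "p = Transposition.transpose i j"
      proof
        fix x show "p x = Transposition.transpose i j x"
          using a \<open>p j = i\<close> out[of x] by (cases "x = i"; cases "x = j"; simp)
      qed
      thus ?thesis by simp
    qed
  next
    fix p assume "p \<in> {id, Transposition.transpose i j}"
    thus "p \<in> {p. p permutes {i,j}}"
      by (auto simp: permutes_id permutes_swap_id)
  qed
  have ne: "id \<noteq> Transposition.transpose i j"
    using ij(3) by (metis id_apply transpose_apply_first)
  have "det A = (\<Sum>p\<in>{p. p permutes {i,j}}. signof p * (\<Prod>r\<in>{i,j}. A $$ (r, p r)))"
    using det_id_outside[of A n "{i,j}"] A idr ij by auto
  also have "\<dots> = A $$ (i,i) * A $$ (j,j) - A $$ (i,j) * A $$ (j,i)"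
    unfolding P using ne ij(3) by (simp add: sign_swap_id )
  finally show ?thesis .
qed

lemma det_id_one_row:
  fixes A :: "'a::comm_ring_1 mat"
  assumes A: "A \<in> carrier_mat n n" and i: "i < n"
    and idr: "\<And>r c. r < n \<Longrightarrow> c < n \<Longrightarrow> r \<noteq> i \<Longrightarrow> A $$ (r,c) = (if r = c then 1 else 0)"
  shows "det A = A $$ (i,i)"
proof -
  have P: "{p. p permutes {i}} = {id}"
    using permutes_sing by auto
  have "det A = (\<Sum>p\<in>{p. p permutes {i}}. signof p * (\<Prod>r\<in>{i}. A $$ (r, p r)))"
    using det_id_outside[of A n "{i}"] A i idr by auto
  thus ?thesis unfolding P by (simp add: )
qed



definition ebas :: "(nat\<Rightarrow>complex) set \<Rightarrow> nat set \<Rightarrow> nat \<Rightarrow> nat \<Rightarrow> complex" where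
  "ebas Y S m = (THE y. y \<in> Y \<and> (\<forall>i\<in>S. y i = (if i = m then 1 else 0)))"

definition pv :: "nat \<Rightarrow> (nat\<Rightarrow>complex) set \<Rightarrow> nat set \<Rightarrow> (nat\<Rightarrow>complex) \<Rightarrow> nat \<Rightarrow> complex" where
  "pv n Y S x l = (if l < n then (if l \<in> S then - (\<Sum>l'\<in>{..<n}-S. ebas Y S l l' * x l') else x l) else 0)"

definition uv :: "nat \<Rightarrow> (nat\<Rightarrow>complex) set \<Rightarrow> (nat \<Rightarrow> complex) \<Rightarrow> nat set \<Rightarrow> (nat\<Rightarrow>complex) \<Rightarrow> nat \<Rightarrow> complex" where
  "uv n Y D S x j = (\<Sum>m\<in>S. (x m - D m * pv n Y S x m) * ebas Y S m j)"

definition Psi where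
  "Psi n Y D S x = ((\<lambda>l. uv n Y D S x l + D l * pv n Y S x l), pv n Y S x)"

definition inT where
  "inT n Y D w \<longleftrightarrow> (\<exists>u\<in>Y. \<exists>v\<in>annih n Y. w = ((\<lambda>l. u l + D l * v l), v))"

definition unit :: "nat \<Rightarrow> nat \<Rightarrow> complex" where "unit c l = (if l = c then 1 else 0)"

definition Jm where "Jm n Y D S S' r c = coordI S' (Psi n Y D S (unit c)) r"

locale subsp =
  fixes n :: nat and Y :: "(nat \<Rightarrow> complex) set"
  assumes zero: "(\<lambda>j. 0) \<in> Y"
    and add: "y \<in> Y \<Longrightarrow> y' \<in> Y \<Longrightarrow> (\<lambda>j. y j + y' j) \<in> Y"
    and smult: "y \<in> Y \<Longrightarrow> (\<lambda>j. s * y j) \<in> Y"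
    and vanish: "y \<in> Y \<Longrightarrow> n \<le> j \<Longrightarrow> y j = 0"
begin

lemma diff: "y \<in> Y \<Longrightarrow> y' \<in> Y \<Longrightarrow> (\<lambda>j. y j - y' j) \<in> Y"
  using add[of y "\<lambda>j. (-1) * y' j"] smult[of y' "-1"] by simp

lemma sum_in: "finite A \<Longrightarrow> (\<And>a. a \<in> A \<Longrightarrow> f a \<in> Y) \<Longrightarrow> (\<lambda>j. \<Sum>a\<in>A. f a j) \<in> Y"
proof (induction A rule: finite_induct)
  case empty thus ?case using zero by simp
next
  case (insert x F)
  thus ?case using add[of "f x" "\<lambda>j. \<Sum>a\<in>F. f a j"] by simp
qed

lemma lincomb_in: "finite A \<Longrightarrow> (\<And>a. a \<in> A \<Longrightarrow> f a \<in> Y) \<Longrightarrow> (\<lambda>j. \<Sum>a\<in>A. g a * f a j) \<in> Y"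
  using sum_in[of A "\<lambda>a j. g a * f a j"] smult by auto

context
  fixes S assumes cs: "is_coord_system n Y S"
begin

lemma S_sub: "S \<subseteq> {..<n}" using cs unfolding is_coord_system_def by auto
lemma S_fin: "finite S" using S_sub finite_subset by blast

lemma ebas: "ebas Y S m \<in> Y" "\<And>i. i \<in> S \<Longrightarrow> ebas Y S m i = (if i = m then 1 else 0)"
proof -
  have "\<exists>!y. y \<in> Y \<and> (\<forall>i\<in>S. y i = (if i = m then 1 else 0))"
    using cs unfolding is_coord_system_def by (auto dest: spec[of _ "\<lambda>i. if i = m then 1 else 0"])
  from theI'[OF this] show "ebas Y S m \<in> Y" "\<And>i. i \<in> S \<Longrightarrow> ebas Y S m i = (if i = m then 1 else 0)"
    unfolding ebas_def by auto
qed

lemma cs_unique: "y \<in> Y \<Longrightarrow> y' \<in> Y \<Longrightarrow> (\<And>i. i \<in> S \<Longrightarrow> y i = y' i) \<Longrightarrow> y = y'"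
  using cs unfolding is_coord_system_def by (metis (no_types, lifting))

lemma delta_sum: "i \<in> S \<Longrightarrow> (\<Sum>m\<in>S. g m * ebas Y S m i) = g i"
proof -
  assume i: "i \<in> S"
  have "(\<Sum>m\<in>S. g m * ebas Y S m i) = (\<Sum>m\<in>S. if m = i then g m else 0)"
    using ebas(2)[OF i] by (intro sum.cong) auto
  also have "\<dots> = g i" using i S_fin by simp
  finally show ?thesis .
qed

lemma expand: "y \<in> Y \<Longrightarrow> y = (\<lambda>j. \<Sum>m\<in>S. y m * ebas Y S m j)"
  by (rule cs_unique) (auto intro!: lincomb_in S_fin ebas simp: delta_sum)

lemma annih_char: "v \<in> annih n Y \<longleftrightarrow> (\<forall>j\<ge>n. v j = 0) \<and> (\<forall>m\<in>S. (\<Sum>l<n. ebas Y S m l * v l) = 0)"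
proof
  assume "v \<in> annih n Y" thus "(\<forall>j\<ge>n. v j = 0) \<and> (\<forall>m\<in>S. (\<Sum>l<n. ebas Y S m l * v l) = 0)"
    unfolding annih_def using ebas(1) by auto
next
  assume a: "(\<forall>j\<ge>n. v j = 0) \<and> (\<forall>m\<in>S. (\<Sum>l<n. ebas Y S m l * v l) = 0)"
  have "(\<Sum>j<n. y j * v j) = 0" if y: "y \<in> Y" for y
  proof -
    have "(\<Sum>j<n. y j * v j) = (\<Sum>j<n. (\<Sum>m\<in>S. y m * ebas Y S m j) * v j)"
      by (subst expand[OF y]) simp
    also have "\<dots> = (\<Sum>m\<in>S. y m * (\<Sum>j<n. ebas Y S m j * v j))"
      by (simp add: sum_distrib_left sum_distrib_right sum.swap[of _ S] mult_ac)
    also have "\<dots> = 0" using a by simp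
    finally show ?thesis .
  qed
  thus "v \<in> annih n Y" using a unfolding annih_def by auto
qed

lemma split_n: "(\<Sum>l<n. f l) = (\<Sum>l\<in>S. f l) + (\<Sum>l\<in>{..<n}-S. f l)"
  using S_sub S_fin by (metis add.commute finite_lessThan sum.subset_diff)

lemma pv_annih: "pv n Y S x \<in> annih n Y"
  unfolding annih_char
proof (intro conjI allI impI ballI)
  fix j assume "n \<le> j" thus "pv n Y S x j = 0" unfolding pv_def by simp
next
  fix m assume m: "m \<in> S"
  have "(\<Sum>l<n. ebas Y S m l * pv n Y S x l)
      = (\<Sum>l\<in>S. ebas Y S m l * pv n Y S x l) + (\<Sum>l\<in>{..<n}-S. ebas Y S m l * pv n Y S x l)"
    by (rule split_n)
  also have "(\<Sum>l\<in>S. ebas Y S m l * pv n Y S x l) = pv n Y S x m"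
  proof -
    have "(\<Sum>l\<in>S. ebas Y S m l * pv n Y S x l) = (\<Sum>l\<in>S. if l = m then pv n Y S x l else 0)"
      using ebas(2) by (intro sum.cong) auto
    thus ?thesis using m S_fin by simp
  qed
  also have "(\<Sum>l\<in>{..<n}-S. ebas Y S m l * pv n Y S x l) = (\<Sum>l\<in>{..<n}-S. ebas Y S m l * x l)"
    by (intro sum.cong) (auto simp: pv_def)
  finally show "(\<Sum>l<n. ebas Y S m l * pv n Y S x l) = 0"
    using m S_sub by (auto simp: pv_def)
qed

lemma pv_unique: "v \<in> annih n Y \<Longrightarrow> (\<And>l. l < n \<Longrightarrow> l \<notin> S \<Longrightarrow> v l = x l) \<Longrightarrow> v = pv n Y S x"
proof
  fix l assume v: "v \<in> annih n Y" and vx: "\<And>l. l < n \<Longrightarrow> l \<notin> S \<Longrightarrow> v l = x l"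
  show "v l = pv n Y S x l"
  proof (cases "l < n \<and> l \<in> S")
    case True
    have "0 = (\<Sum>l'<n. ebas Y S l l' * v l')" using v True unfolding annih_char by auto
    also have "\<dots> = (\<Sum>l'\<in>S. ebas Y S l l' * v l') + (\<Sum>l'\<in>{..<n}-S. ebas Y S l l' * v l')"
      by (rule split_n)
    also have "(\<Sum>l'\<in>S. ebas Y S l l' * v l') = v l"
    proof -
      have "(\<Sum>l'\<in>S. ebas Y S l l' * v l') = (\<Sum>l'\<in>S. if l' = l then v l' else 0)"
        using ebas(2) by (intro sum.cong) auto
      thus ?thesis using True S_fin by simp
    qed
    also have "(\<Sum>l'\<in>{..<n}-S. ebas Y S l l' * v l') = (\<Sum>l'\<in>{..<n}-S. ebas Y S l l' * x l')"
      using vx by (intro sum.cong) auto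
    finally show ?thesis using True unfolding pv_def by (simp add: eq_neg_iff_add_eq_0 add.commute)
  next
    case False
    thus ?thesis using vx v unfolding pv_def annih_def by auto
  qed
qed

end
end

lemma pv_lincomb: "finite C \<Longrightarrow> pv n Y S (\<lambda>l. \<Sum>c\<in>C. g c * h c l) l = (\<Sum>c\<in>C. g c * pv n Y S (h c) l)"
  unfolding pv_def
  by (auto simp: sum_distrib_left sum.swap[of _ C] mult_ac sum_negf)

lemma uv_lincomb: "finite C \<Longrightarrow> uv n Y D S (\<lambda>l. \<Sum>c\<in>C. g c * h c l) j = (\<Sum>c\<in>C. g c * uv n Y D S (h c) j)"
  unfolding uv_def pv_lincomb
  by (simp add: sum_distrib_left sum_distrib_right sum.swap[of _ C] mult_ac sum_subtractf
      right_diff_distrib left_diff_distrib)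



context subsp begin

lemma unit_sum: "(\<Sum>c\<in>A. x c * unit c l) = (if l \<in> A then x l else 0)" if "finite A"
proof -
  have "(\<Sum>c\<in>A. x c * unit c l) = (\<Sum>c\<in>A. if c = l then x c else 0)"
    by (intro sum.cong) (auto simp: unit_def)
  thus ?thesis using that by simp
qed

lemma unit_expand: "(\<And>l. n \<le> l \<Longrightarrow> x l = 0) \<Longrightarrow> x = (\<lambda>l. \<Sum>c<n. x c * unit c l)"
  by (rule ext) (auto simp: unit_sum)

lemma inT_vanish: "inT n Y D w \<Longrightarrow> n \<le> j \<Longrightarrow> fst w j = 0 \<and> snd w j = 0"
  unfolding inT_def annih_def using vanish by auto

context
  fixes S assumes cs: "is_coord_system n Y S"
begin

lemma uv_in: "uv n Y D S x \<in> Y"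
  unfolding uv_def[abs_def] by (rule lincomb_in[OF S_fin[OF cs]]) (rule ebas(1)[OF cs])

lemma Psi_T: "inT n Y D (Psi n Y D S x)"
  unfolding inT_def Psi_def
  by (rule bexI[of _ "uv n Y D S x"], rule bexI[of _ "pv n Y S x"])
     (auto intro!: uv_in pv_annih[OF cs])

lemma uv_at: "i \<in> S \<Longrightarrow> uv n Y D S x i = x i - D i * pv n Y S x i"
  unfolding uv_def by (rule delta_sum[OF cs])

lemma coord_Psi: "(\<And>l. n \<le> l \<Longrightarrow> x l = 0) \<Longrightarrow> coordI S (Psi n Y D S x) = x"
proof
  fix l assume x: "\<And>l. n \<le> l \<Longrightarrow> x l = 0"
  show "coordI S (Psi n Y D S x) l = x l"
    using uv_at[of l] x[of l] unfolding coordI_def Psi_def by (auto simp: pv_def)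
qed

lemma Psi_coord: assumes w: "inT n Y D w" shows "Psi n Y D S (coordI S w) = w"
proof -
  from w obtain u v where u: "u \<in> Y" and v: "v \<in> annih n Y" and wd: "w = ((\<lambda>l. u l + D l * v l), v)"
    unfolding inT_def by auto
  let ?x = "coordI S w"
  have pvx: "pv n Y S ?x = v"
    by (rule pv_unique[OF cs v, symmetric]) (auto simp: coordI_def wd)
  have "uv n Y D S ?x = u"
  proof
    fix j
    have "uv n Y D S ?x j = (\<Sum>m\<in>S. u m * ebas Y S m j)"
      unfolding uv_def pvx by (intro sum.cong) (auto simp: coordI_def wd)
    also have "\<dots> = u j" by (subst (2) expand[OF cs u]) simp
    finally show "uv n Y D S ?x j = u j" .
  qed
  hence "Psi n Y D S ?x = ((\<lambda>l. u l + D l * v l), v)" unfolding Psi_def pvx by simp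
  thus ?thesis using wd by simp
qed

lemma Psi_lin:
  assumes x: "\<And>l. n \<le> l \<Longrightarrow> x l = 0"
  shows "fst (Psi n Y D S x) l = (\<Sum>c<n. x c * fst (Psi n Y D S (unit c)) l)"
    and "snd (Psi n Y D S x) l = (\<Sum>c<n. x c * snd (Psi n Y D S (unit c)) l)"
proof -
  have xe: "x = (\<lambda>l. \<Sum>c<n. x c * unit c l)" by (rule unit_expand[OF x])
  have p: "pv n Y S x l' = pv n Y S (\<lambda>l. \<Sum>c<n. x c * unit c l) l'" for l'
    by (simp only: xe[symmetric])
  have u: "uv n Y D S x l' = uv n Y D S (\<lambda>l. \<Sum>c<n. x c * unit c l) l'" for l'
    by (simp only: xe[symmetric])
  show "snd (Psi n Y D S x) l = (\<Sum>c<n. x c * snd (Psi n Y D S (unit c)) l)"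
    unfolding Psi_def snd_conv p pv_lincomb[OF finite_lessThan] ..
  show "fst (Psi n Y D S x) l = (\<Sum>c<n. x c * fst (Psi n Y D S (unit c)) l)"
    unfolding Psi_def fst_conv p u pv_lincomb[OF finite_lessThan] uv_lincomb[OF finite_lessThan]
    by (simp add: sum.distrib sum_distrib_left algebra_simps)
qed

end

lemma Jm_chain:
  assumes I: "is_coord_system n Y I" and S: "is_coord_system n Y S"
  shows "Jm n Y D I I'' r c = (\<Sum>c'<n. Jm n Y D S I'' r c' * Jm n Y D I S c' c)"
proof -
  let ?w = "Psi n Y D I (unit c)"
  let ?y = "coordI S ?w"
  have wT: "inT n Y D ?w" by (rule Psi_T[OF I])
  have yv: "\<And>l. n \<le> l \<Longrightarrow> ?y l = 0"
    using inT_vanish[OF wT] S_sub[OF S] unfolding coordI_def by auto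
  have "Jm n Y D I I'' r c = coordI I'' (Psi n Y D S ?y) r"
    unfolding Jm_def Psi_coord[OF S wT] ..
  also have "\<dots> = (\<Sum>c'<n. ?y c' * coordI I'' (Psi n Y D S (unit c')) r)"
    unfolding coordI_def[of I''] using Psi_lin[OF S, where x="?y", OF yv] by (simp add: sum_distrib_left)
  also have "\<dots> = (\<Sum>c'<n. Jm n Y D S I'' r c' * Jm n Y D I S c' c)"
    unfolding Jm_def by (simp add: mult.commute)
  finally show ?thesis .
qed

lemma Jm_self:
  assumes I: "is_coord_system n Y I" and c: "c < n"
  shows "Jm n Y D I I r c = unit c r"
  unfolding Jm_def using coord_Psi[OF I, of "unit c"] c by (auto simp: unit_def)

end


definition JM where "JM n Y D I I' = mat n n (\<lambda>(r,c). Jm n Y D I I' r c)"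

lemma unit_sum2: "finite A \<Longrightarrow> (\<Sum>l\<in>A. f l * unit c l) = (if c \<in> A then f c else 0)"
proof -
  assume A: "finite A"
  have "(\<Sum>l\<in>A. f l * unit c l) = (\<Sum>l\<in>A. if l = c then f l else 0)"
    by (intro sum.cong) (auto simp: unit_def)
  thus ?thesis using A by simp
qed

context subsp begin

lemma JM_chain:
  assumes I: "is_coord_system n Y I" and S: "is_coord_system n Y S"
  shows "JM n Y D I I'' = JM n Y D S I'' * JM n Y D I S"
  by (rule eq_matI) (auto simp: JM_def scalar_prod_def atLeast0LessThan intro: Jm_chain[OF I S])

lemma JM_self:
  assumes I: "is_coord_system n Y I"
  shows "JM n Y D I I = 1\<^sub>m n"
  by (rule eq_matI) (auto simp: JM_def Jm_self[OF I] unit_def)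

lemma exchange_cs:
  assumes I: "is_coord_system n Y I" and i: "i \<in> I" and j: "j < n" "j \<notin> I"
    and E: "ebas Y I i j \<noteq> 0"
  shows "is_coord_system n Y (insert j (I - {i}))"
proof -
  let ?S = "insert j (I - {i})"
  let ?E = "ebas Y I i j"
  have fI: "finite I" by (rule S_fin[OF I])
  have ex: "\<exists>y. y \<in> Y \<and> (\<forall>s\<in>?S. y s = z s)" for z
  proof -
    define \<alpha> where "\<alpha> m = (if m = i then (z j - (\<Sum>m'\<in>I-{i}. z m' * ebas Y I m' j)) / ?E else z m)" for m
    let ?y = "\<lambda>l. \<Sum>m\<in>I. \<alpha> m * ebas Y I m l"
    have yY: "?y \<in> Y" by (rule lincomb_in[OF fI ebas(1)[OF I]])
    have "?y s = z s" if s: "s \<in> I - {i}" for s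
      using delta_sum[OF I, of s \<alpha>] s by (simp add: \<alpha>_def)
    moreover have "?y j = z j"
    proof -
      have "?y j = \<alpha> i * ?E + (\<Sum>m\<in>I-{i}. \<alpha> m * ebas Y I m j)"
        using i fI by (simp add: sum.remove)
      also have "(\<Sum>m\<in>I-{i}. \<alpha> m * ebas Y I m j) = (\<Sum>m\<in>I-{i}. z m * ebas Y I m j)"
        by (intro sum.cong) (auto simp: \<alpha>_def)
      finally show ?thesis using E by (simp add: \<alpha>_def)
    qed
    ultimately show ?thesis using yY by auto
  qed
  have un: "y = y'" if y: "y \<in> Y" "y' \<in> Y" "\<forall>s\<in>?S. y s = z s" "\<forall>s\<in>?S. y' s = z s" for y y' z
  proof -
    let ?d = "\<lambda>l. y l - y' l"
    have dY: "?d \<in> Y" using diff y by auto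
    have d0: "?d m = 0" if "m \<in> I - {i}" for m using that y by auto
    have dexp: "?d l = ?d i * ebas Y I i l" for l
    proof -
      have "?d = (\<lambda>l. \<Sum>m\<in>I. ?d m * ebas Y I m l)" by (rule expand[OF I dY])
      hence "?d l = (\<Sum>m\<in>I. ?d m * ebas Y I m l)" by (rule fun_cong)
      also have "\<dots> = ?d i * ebas Y I i l + (\<Sum>m\<in>I-{i}. ?d m * ebas Y I m l)"
        using i fI by (simp add: sum.remove)
      also have "(\<Sum>m\<in>I-{i}. ?d m * ebas Y I m l) = 0" using d0 by simp
      finally show ?thesis by simp
    qed
    have "?d j = 0" using y by auto
    hence "?d i = 0" using dexp[of j] E by simp
    hence "?d l = 0" for l using dexp[of l] by simp
    thus ?thesis by auto
  qed
  show ?thesis unfolding is_coord_system_def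
  proof (intro conjI allI)
    show "?S \<subseteq> {..<n}" using S_sub[OF I] j by auto
  next
    fix z
    from ex[of z] obtain y where y: "y \<in> Y" "\<forall>s\<in>?S. y s = z s" by auto
    show "\<exists>!y. y \<in> Y \<and> (\<forall>s\<in>?S. y s = z s)"
    proof (rule ex1I[of _ y])
      show "y \<in> Y \<and> (\<forall>s\<in>?S. y s = z s)" using y by auto
    next
      fix y' assume "y' \<in> Y \<and> (\<forall>s\<in>?S. y' s = z s)"
      thus "y' = y" using un[of y' y z] y by auto
    qed
  qed
qed

lemma exchange_exists:
  assumes I: "is_coord_system n Y I" and I': "is_coord_system n Y I'"
    and i: "i \<in> I" "i \<notin> I'"
  shows "\<exists>j\<in>I' - I. ebas Y I i j \<noteq> 0"
proof (rule ccontr)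
  assume "\<not> ?thesis"
  hence z: "\<forall>j\<in>I' - I. ebas Y I i j = 0" by auto
  have "ebas Y I i = (\<lambda>_. 0)"
  proof (rule cs_unique[OF I' ebas(1)[OF I] zero])
    fix l assume l: "l \<in> I'"
    show "ebas Y I i l = 0"
    proof (cases "l \<in> I")
      case True thus ?thesis using ebas(2)[OF I True] i l by auto
    next
      case False thus ?thesis using z l by auto
    qed
  qed
  moreover have "ebas Y I i i = 1" using ebas(2)[OF I i(1)] by simp
  ultimately show False by simp
qed

lemma exchange_det:
  assumes I: "is_coord_system n Y I" and i: "i \<in> I" and j: "j < n" "j \<notin> I"
  shows "det (JM n Y D I (insert j (I - {i}))) = (ebas Y I i j)^2"
proof -
  let ?S = "insert j (I - {i})"
  let ?M = "JM n Y D I ?S"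
  have fI: "finite I" by (rule S_fin[OF I])
  have iN: "i < n" using S_sub[OF I] i by auto
  have ij: "i \<noteq> j" using i j by auto
  have cP: "coordI I (Psi n Y D I (unit c)) = unit c" if "c < n" for c
    by (rule coord_Psi[OF I]) (use that in \<open>auto simp: unit_def\<close>)
  have idr: "?M $$ (r,c) = (if r = c then 1 else 0)" if "r < n" "c < n" "r \<noteq> i" "r \<noteq> j" for r c
  proof -
    have "?M $$ (r,c) = coordI I (Psi n Y D I (unit c)) r"
      using that by (auto simp: JM_def Jm_def coordI_def)
    thus ?thesis using cP[OF that(2)] by (simp add: unit_def)
  qed
  have pvi: "pv n Y I (unit i) m = 0" for m
    using i fI by (auto simp: pv_def unit_sum2 unit_def[of i m])
  have Mii: "?M $$ (i,i) = 0"
    using iN ij i by (simp add: JM_def Jm_def coordI_def Psi_def pvi)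
  have Mij: "?M $$ (i,j) = - ebas Y I i j"
    using iN j ij i by (simp add: JM_def Jm_def coordI_def Psi_def pv_def unit_sum2)
  have Mji: "?M $$ (j,i) = ebas Y I i j"
  proof -
    have "?M $$ (j,i) = uv n Y D I (unit i) j"
      using iN j by (simp add: JM_def Jm_def coordI_def Psi_def pvi)
    also have "\<dots> = (\<Sum>m\<in>I. unit i m * ebas Y I m j)"
      unfolding uv_def pvi by simp
    also have "\<dots> = (\<Sum>m\<in>I. ebas Y I m j * unit i m)" by (simp add: mult.commute)
    also have "\<dots> = ebas Y I i j"
      using i fI by (simp add: unit_sum2)
    finally show ?thesis .
  qed
  have "det ?M = ?M $$ (i,i) * ?M $$ (j,j) - ?M $$ (i,j) * ?M $$ (j,i)"
    by (rule det_id_two_rows[OF _ iN j(1) ij idr]) (auto simp: JM_def)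
  thus ?thesis using Mii Mij Mji by (simp add: power2_eq_square)
qed

lemma main_chain:
  fixes d :: "nat set \<Rightarrow> complex"
  assumes I': "is_coord_system n Y I'"
    and dex: "\<And>I i j. is_coord_system n Y I \<Longrightarrow> card I = card I' \<Longrightarrow> i \<in> I \<Longrightarrow> j < n \<Longrightarrow> j \<notin> I \<Longrightarrow>
        is_coord_system n Y (insert j (I - {i})) \<Longrightarrow>
        (d (insert j (I - {i})))^2 = (ebas Y I i j)^2 * (d I)^2"
  shows "is_coord_system n Y I \<Longrightarrow> card I = card I' \<Longrightarrow>
    det (JM n Y D I I') * (d I)^2 = (d I')^2"
proof (induction "card (I - I')" arbitrary: I rule: less_induct)
  case less
  note I = less.prems(1)
  have fI: "finite I" by (rule S_fin[OF I])
  have fI': "finite I'" by (rule S_fin[OF I'])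
  show ?case
  proof (cases "I \<subseteq> I'")
    case True
    hence "I = I'" using card_subset_eq[OF fI' True] less.prems(2) by simp
    thus ?thesis using JM_self[OF I] by simp
  next
    case False
    then obtain i where i: "i \<in> I" "i \<notin> I'" by auto
    obtain j where j: "j \<in> I' - I" "ebas Y I i j \<noteq> 0"
      using exchange_exists[OF I I' i] by auto
    let ?S = "insert j (I - {i})"
    have jn: "j < n" using j S_sub[OF I'] by auto
    have S: "is_coord_system n Y ?S" using exchange_cs[OF I i(1) jn _ j(2)] j by auto
    have c1: "card (I - {i}) = card I - 1" using fI i by (simp add: card_Diff_singleton)
    have c0: "card I > 0" using fI i card_gt_0_iff by blast
    have cS: "card ?S = card I' "
      using less.prems(2) j fI c1 c0 by (simp add: card_insert_if)
    have lt: "card (?S - I') < card (I - I')"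
    proof -
      have eq: "?S - I' = (I - I') - {i}" using j by auto
      have "card ((I - I') - {i}) < card (I - I')" by (rule card_Diff1_less) (use fI i in auto)
      thus ?thesis unfolding eq .
    qed
    have IH: "det (JM n Y D ?S I') * (d ?S)^2 = (d I')^2"
      by (rule less.hyps[OF lt S cS])
    have "det (JM n Y D I I') = det (JM n Y D ?S I') * det (JM n Y D I ?S)"
      unfolding JM_chain[OF I S, of D I'] by (rule det_mult) (auto simp: JM_def)
    also have "det (JM n Y D I ?S) = (ebas Y I i j)^2"
      using exchange_det[OF I i(1) jn] j by auto
    finally have "det (JM n Y D I I') * (d I)^2 = det (JM n Y D ?S I') * ((ebas Y I i j)^2 * (d I)^2)"
      by (simp add: mult_ac)
    also have "(ebas Y I i j)^2 * (d I)^2 = (d ?S)^2"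
      using dex[OF I less.prems(2) i(1) jn _ S] j by auto
    finally show ?thesis using IH by simp
  qed
qed

end


lemma Ysp_subsp: "subsp n (Ysp n k b)"
proof
  show "(\<lambda>j. 0) \<in> Ysp n k b" unfolding Ysp_def by (rule CollectI, rule exI[of _ "\<lambda>_. 0"]) auto
next
  fix y y' assume "y \<in> Ysp n k b" "y' \<in> Ysp n k b"
  then obtain c c' where "y = (\<lambda>j. if j < n then (\<Sum>i<k. c i * b i j) else 0)"
      "y' = (\<lambda>j. if j < n then (\<Sum>i<k. c' i * b i j) else 0)" unfolding Ysp_def by auto
  thus "(\<lambda>j. y j + y' j) \<in> Ysp n k b" unfolding Ysp_def
    by (intro CollectI exI[of _ "\<lambda>i. c i + c' i"]) (auto simp: sum.distrib distrib_right)
next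
  fix y s assume "y \<in> Ysp n k b"
  then obtain c where "y = (\<lambda>j. if j < n then (\<Sum>i<k. c i * b i j) else 0)" unfolding Ysp_def by auto
  thus "(\<lambda>j. s * y j) \<in> Ysp n k b" unfolding Ysp_def
    by (intro CollectI exI[of _ "\<lambda>i. s * c i"]) (auto simp: sum_distrib_left mult_ac)
next
  fix y j assume "y \<in> Ysp n k b" "n \<le> j"
  thus "y j = 0" unfolding Ysp_def by auto
qed

lemma bv_in: "r < k \<Longrightarrow> (\<lambda>j. if j < n then b r j else 0) \<in> Ysp n k b"
proof -
  assume r: "r < k"
  have "(\<Sum>i<k. (if i = r then 1 else 0) * b i j) = b r j" for j
  proof -
    have "(\<Sum>i<k. (if i = r then 1 else 0) * b i j) = (\<Sum>i<k. if i = r then b i j else 0)"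
      by (intro sum.cong) auto
    thus ?thesis using r by simp
  qed
  thus ?thesis unfolding Ysp_def
    by (intro CollectI exI[of _ "\<lambda>i. if i = r then 1 else 0"]) auto
qed

lemma sum_delta_mul: "finite A \<Longrightarrow> (\<Sum>l\<in>A. (f l :: complex) * (if l = a then 1 else 0)) = (if a \<in> A then f a else 0)"
proof -
  assume A: "finite A"
  have "(\<Sum>l\<in>A. f l * (if l = a then 1 else 0)) = (\<Sum>l\<in>A. if l = a then f l else 0)"
    by (intro sum.cong) auto
  thus ?thesis using A by simp
qed

definition Mf :: "nat \<Rightarrow> (nat \<Rightarrow> nat \<Rightarrow> complex) \<Rightarrow> (nat \<Rightarrow> nat) \<Rightarrow> complex mat" where
  "Mf k b f = mat k k (\<lambda>(r,l). b r (f l))"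

lemma gram_eq:
  assumes f: "bij_betw f {..<k} A" and g: "bij_betw g {..<k} A"
  shows "det (Mf k b f) ^ 2 = det (Mf k b g) ^ 2"
proof -
  have G: "Mf k b f * (Mf k b f)\<^sup>T = Mf k b g * (Mf k b g)\<^sup>T"
  proof (rule eq_matI)
    fix r r' assume "r < dim_row (Mf k b g * (Mf k b g)\<^sup>T)" "r' < dim_col (Mf k b g * (Mf k b g)\<^sup>T)"
    hence rr: "r < k" "r' < k" by (auto simp: Mf_def)
    have s: "(\<Sum>l<k. b r (h l) * b r' (h l)) = (\<Sum>m\<in>A. b r m * b r' m)" if "bij_betw h {..<k} A" for h
      using sum.reindex_bij_betw[OF that, of "\<lambda>m. b r m * b r' m"] by simp
    show "(Mf k b f * (Mf k b f)\<^sup>T) $$ (r, r') = (Mf k b g * (Mf k b g)\<^sup>T) $$ (r, r')"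
      using rr s[OF f] s[OF g] by (simp add: Mf_def scalar_prod_def atLeast0LessThan)
  qed (auto simp: Mf_def)
  have sq: "det (h * h\<^sup>T) = det h ^ 2" if h: "h \<in> carrier_mat k k" for h :: "complex mat"
  proof -
    have "det (h * h\<^sup>T) = det h * det (h\<^sup>T)" by (rule det_mult[OF h]) (use h in simp)
    also have "det (h\<^sup>T) = det h" by (rule det_transpose[OF h])
    finally show ?thesis by (simp add: power2_eq_square)
  qed
  have "det (Mf k b f) ^ 2 = det (Mf k b f * (Mf k b f)\<^sup>T)" by (rule sq[symmetric]) (simp add: Mf_def)
  also have "\<dots> = det (Mf k b g * (Mf k b g)\<^sup>T)" by (simp add: G)
  also have "\<dots> = det (Mf k b g) ^ 2" by (rule sq) (simp add: Mf_def)
  finally show ?thesis .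
qed

lemma sorted_bij: "finite S \<Longrightarrow> card S = k \<Longrightarrow> bij_betw (\<lambda>l. sorted_list_of_set S ! l) {..<k} S"
  by (rule bij_betw_nth) auto

lemma dminor_Mf: "dminor k b S = det (Mf k b (\<lambda>l. sorted_list_of_set S ! l))"
  unfolding dminor_def Mf_def ..

context
  fixes n k :: nat and b :: "nat \<Rightarrow> nat \<Rightarrow> complex"
  assumes basis: "\<forall>c. (\<forall>j<n. (\<Sum>i<k. c i * b i j) = 0) \<longrightarrow> (\<forall>i<k. c i = 0)"
begin

interpretation subsp n "Ysp n k b" by (rule Ysp_subsp)

lemma dminor_nz:
  assumes I: "is_coord_system n (Ysp n k b) I" and cI: "card I = k"
  shows "dminor k b I \<noteq> 0"
proof
  assume "dminor k b I = 0"
  let ?g = "\<lambda>l. sorted_list_of_set I ! l"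
  let ?M = "Mf k b ?g"
  have Mc: "?M \<in> carrier_mat k k" by (simp add: Mf_def)
  have "det (?M\<^sup>T) = 0" using \<open>dminor k b I = 0\<close> det_transpose[OF Mc] by (simp add: dminor_Mf)
  then obtain v where v: "v \<in> carrier_vec k" "v \<noteq> 0\<^sub>v k" "?M\<^sup>T *\<^sub>v v = 0\<^sub>v k"
    using det_0_iff_vec_prod_zero[of "?M\<^sup>T" k] by (auto simp: Mf_def)
  define c where "c r = (if r < k then v $ r else 0)" for r
  let ?y = "\<lambda>j. if j < n then (\<Sum>i<k. c i * b i j) else 0"
  have yY: "?y \<in> Ysp n k b" unfolding Ysp_def by auto
  have fI: "finite I" using S_fin[OF I] .
  have bij: "bij_betw ?g {..<k} I" by (rule sorted_bij[OF fI cI])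
  have "?y m = 0" if m: "m \<in> I" for m
  proof -
    have "?g ` {..<k} = I" using bij by (simp add: bij_betw_def)
    hence "m \<in> ?g ` {..<k}" using m by auto
    then obtain l where l: "l < k" "?g l = m" by auto
    have "(?M\<^sup>T *\<^sub>v v) $ l = 0" using v(3) l by simp
    hence "(\<Sum>r<k. b r m * v $ r) = 0"
      using l v(1) by (simp add: Mf_def scalar_prod_def atLeast0LessThan)
    moreover have "m < n" using S_sub[OF I] m by auto
    ultimately show ?thesis by (simp add: c_def mult.commute)
  qed
  hence "?y = (\<lambda>_. 0)" using cs_unique[OF I yY zero] by auto
  hence "\<forall>j<n. (\<Sum>i<k. c i * b i j) = 0" by (metis (mono_tags, lifting))
  hence "\<forall>i<k. c i = 0" using basis by blast
  hence "v = 0\<^sub>v k" using v(1) by (intro eq_vecI) (auto simp: c_def)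
  with v(2) show False by simp
qed

lemma dminor_exchange:
  assumes I: "is_coord_system n (Ysp n k b) I" and cI: "card I = k"
    and i: "i \<in> I" and j: "j < n" "j \<notin> I"
    and S: "is_coord_system n (Ysp n k b) (insert j (I - {i}))"
  shows "(dminor k b (insert j (I - {i})))^2 = (ebas (Ysp n k b) I i j)^2 * (dminor k b I)^2"
proof -
  let ?S = "insert j (I - {i})"
  let ?e = "ebas (Ysp n k b) I"
  have fI: "finite I" using S_fin[OF I] .
  have fS: "finite ?S" using fI by simp
  have cS: "card ?S = k" using cI fI i j
    by (simp add: card_insert_if card_Diff_singleton) (metis Suc_pred card_gt_0_iff empty_iff)
  let ?s = "\<lambda>l. sorted_list_of_set ?S ! l"
  let ?g = "\<lambda>l. sorted_list_of_set I ! l"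
  let ?\<theta> = "\<lambda>x. if x = j then i else x"
  let ?\<phi> = "\<lambda>l. ?\<theta> (?s l)"
  have bs: "bij_betw ?s {..<k} ?S" by (rule sorted_bij[OF fS cS])
  have bg: "bij_betw ?g {..<k} I" by (rule sorted_bij[OF fI cI])
  have bt: "bij_betw ?\<theta> ?S I"
    by (rule bij_betw_imageI) (use i j in \<open>auto simp: inj_on_def\<close>)
  have bphi: "bij_betw ?\<phi> {..<k} I" using bij_betw_trans[OF bs bt] by (simp add: comp_def)
  have "?s ` {..<k} = ?S" using bs by (simp add: bij_betw_def)
  hence "j \<in> ?s ` {..<k}" by auto
  then obtain l0 where l0: "l0 < k" "?s l0 = j" by auto
  define R where "R = mat k k (\<lambda>(l,l'). if ?s l' = j then ?e (?\<phi> l) j else (if l = l' then 1 else 0))"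
  have R: "R \<in> carrier_mat k k" unfolding R_def by simp
  have sinj: "l = l'" if "l < k" "l' < k" "?s l = ?s l'" for l l'
    using bs that unfolding bij_betw_def inj_on_def by auto
  have detR: "det R = ?e i j"
  proof -
    have "det R = det R\<^sup>T" using det_transpose[OF R] by simp
    also have "\<dots> = R\<^sup>T $$ (l0, l0)"
    proof (rule det_id_one_row[of _ k])
      fix r c assume "r < k" "c < k" "r \<noteq> l0"
      moreover have "?s r \<noteq> j" using sinj[OF \<open>r < k\<close> l0(1)] l0 \<open>r \<noteq> l0\<close> by auto
      ultimately show "R\<^sup>T $$ (r, c) = (if r = c then 1 else 0)" by (simp add: R_def)
    qed (use R l0 in auto)
    also have "\<dots> = ?e i j" using l0 by (simp add: R_def)
    finally show ?thesis .
  qed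
  have bexp: "b r j = (\<Sum>m\<in>I. b r m * ?e m j)" if r: "r < k" for r
  proof -
    have "(\<lambda>j. if j < n then b r j else 0) = (\<lambda>j'. \<Sum>m\<in>I. (if m < n then b r m else 0) * ?e m j')"
      by (rule expand[OF I bv_in[OF r]])
    from fun_cong[OF this, of j] show ?thesis using j S_sub[OF I] by (simp cong: sum.cong add: subset_iff)
  qed
  have MS: "Mf k b ?s = Mf k b ?\<phi> * R"
  proof (rule eq_matI)
    fix r l' assume "r < dim_row (Mf k b ?\<phi> * R)" "l' < dim_col (Mf k b ?\<phi> * R)"
    hence rl: "r < k" "l' < k" by (auto simp: Mf_def R_def)
    show "Mf k b ?s $$ (r, l') = (Mf k b ?\<phi> * R) $$ (r, l')"
    proof (cases "?s l' = j")
      case True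
      have "(Mf k b ?\<phi> * R) $$ (r, l') = (\<Sum>l<k. b r (?\<phi> l) * ?e (?\<phi> l) j)"
        using rl True by (simp add: Mf_def R_def scalar_prod_def atLeast0LessThan)
      also have "\<dots> = (\<Sum>m\<in>I. b r m * ?e m j)"
        using sum.reindex_bij_betw[OF bphi, of "\<lambda>m. b r m * ?e m j"] by simp
      also have "\<dots> = b r j" using bexp[OF rl(1)] by simp
      finally show ?thesis using rl True by (simp add: Mf_def)
    next
      case False
      have "(Mf k b ?\<phi> * R) $$ (r, l') = (\<Sum>l<k. b r (?\<phi> l) * (if l = l' then 1 else 0))"
        using rl False by (simp add: Mf_def R_def scalar_prod_def atLeast0LessThan)
      also have "\<dots> = b r (?\<phi> l')" using rl by (simp only: sum_delta_mul[OF finite_lessThan]) simp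
      finally show ?thesis using rl False by (simp add: Mf_def)
    qed
  qed (auto simp: Mf_def R_def)
  have "dminor k b ?S = det (Mf k b ?\<phi>) * det R"
    unfolding dminor_Mf MS by (rule det_mult[of _ k]) (auto simp: Mf_def R_def)
  hence "(dminor k b ?S)^2 = det (Mf k b ?\<phi>)^2 * (?e i j)^2" by (simp add: detR power_mult_distrib)
  also have "det (Mf k b ?\<phi>)^2 = (dminor k b I)^2"
    unfolding dminor_Mf by (rule gram_eq[OF bphi bg])
  finally show ?thesis by (simp add: mult.commute)
qed

end


definition q0f where
  "q0f n Y a I x = (\<lambda>s. \<Sum>m\<in>I. (x m - a m / pv n Y I x m) * ebas Y I m s)"

definition Pt where "Pt n Y a I x = r_map n a (q0f n Y a I x, pv n Y I x)"

lemma pv_affine: "pv n Y S (\<lambda>l. f l + s * g l) l = pv n Y S f l + s * pv n Y S g l"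
  unfolding pv_def by (auto simp: sum.distrib sum_distrib_left algebra_simps)

context subsp begin

context
  fixes I assumes cs: "is_coord_system n Y I"
begin

lemma Pt_ok:
  assumes xv: "\<And>l. n \<le> l \<Longrightarrow> x l = 0" and nz: "\<And>l. l < n \<Longrightarrow> pv n Y I x l \<noteq> 0"
  shows "Pt n Y a I x \<in> Lset n a Y" "coordI I (Pt n Y a I x) = x"
proof -
  have q: "q0f n Y a I x \<in> Y" unfolding q0f_def by (rule lincomb_in[OF S_fin[OF cs] ebas(1)[OF cs]])
  show "Pt n Y a I x \<in> Lset n a Y" unfolding Pt_def Lset_def
    using q pv_annih[OF cs] nz by auto
  show "coordI I (Pt n Y a I x) = x"
  proof
    fix l
    show "coordI I (Pt n Y a I x) l = x l"
    proof (cases "l \<in> I")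
      case True
      hence "l < n" using S_sub[OF cs] by auto
      moreover have "q0f n Y a I x l = x l - a l / pv n Y I x l"
        unfolding q0f_def by (rule delta_sum[OF cs True])
      ultimately show ?thesis using True by (simp add: coordI_def Pt_def r_map_def)
    next
      case False
      thus ?thesis using xv[of l] by (auto simp: coordI_def Pt_def r_map_def pv_def)
    qed
  qed
qed

lemma Lset_coord:
  assumes z: "z \<in> Lset n a Y" and zx: "coordI I z = x"
  shows "z = Pt n Y a I x" "\<And>l. n \<le> l \<Longrightarrow> x l = 0" "\<And>l. l < n \<Longrightarrow> pv n Y I x l \<noteq> 0"
proof -
  from z obtain q p where q: "q \<in> Y" and p: "p \<in> annih n Y" and pnz: "\<forall>j<n. p j \<noteq> 0"
    and zd: "z = r_map n a (q, p)" unfolding Lset_def by auto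
  have pe: "p = pv n Y I x"
    by (rule pv_unique[OF cs p]) (use zx zd in \<open>auto simp: coordI_def r_map_def\<close>)
  have qm: "q m = x m - a m / p m" if m: "m \<in> I" for m
  proof -
    have "m < n" using S_sub[OF cs] m by auto
    hence "x m = q m + a m / p m" using zx zd m by (auto simp: coordI_def r_map_def)
    thus ?thesis by simp
  qed
  have "q = q0f n Y a I x"
  proof -
    have "q = (\<lambda>s. \<Sum>m\<in>I. q m * ebas Y I m s)" by (rule expand[OF cs q])
    also have "\<dots> = q0f n Y a I x" unfolding q0f_def pe[symmetric]
      by (intro ext sum.cong) (auto simp: qm)
    finally show ?thesis .
  qed
  thus "z = Pt n Y a I x" unfolding zd Pt_def pe by simp
  show "\<And>l. n \<le> l \<Longrightarrow> x l = 0"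
  proof -
    fix l assume "n \<le> l"
    moreover hence "l \<notin> I" using S_sub[OF cs] by auto
    ultimately show "x l = 0" using zx zd p by (auto simp: coordI_def r_map_def annih_def)
  qed
  show "\<And>l. l < n \<Longrightarrow> pv n Y I x l \<noteq> 0" using pnz pe by auto
qed

lemma THE_Pt:
  assumes xv: "\<And>l. n \<le> l \<Longrightarrow> x l = 0" and nz: "\<And>l. l < n \<Longrightarrow> pv n Y I x l \<noteq> 0"
  shows "(THE z. z \<in> Lset n a Y \<and> coordI I z = x) = Pt n Y a I x"
  by (rule the_equality) (use Pt_ok[OF xv nz] Lset_coord in auto)

end
end

lemma dinv: "P \<noteq> 0 \<Longrightarrow> ((\<lambda>t. A / (P + (t - t0) * W)) has_field_derivative (- (A / P^2) * W)) (at t0)"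
  by (auto intro!: derivative_eq_intros simp: field_simps power2_eq_square)

lemma dupd: "((\<lambda>t. (x(c:=t)) m) has_field_derivative unit c m) (at t0)"
  by (cases "m = c") (auto simp: unit_def intro!: derivative_eq_intros)

lemma dlin: "((\<lambda>t. P + (t - t0) * W) has_field_derivative W) (at t0)"
  by (auto intro!: derivative_eq_intros)

context subsp begin

lemma deriv_entry:
  assumes cs: "is_coord_system n Y I"
    and xv: "\<And>l. n \<le> l \<Longrightarrow> x l = 0" and nz: "\<And>l. l < n \<Longrightarrow> pv n Y I x l \<noteq> 0"
    and c: "c < n" and r: "r < n"
  shows "deriv (\<lambda>t. coord_change n a Y I I' (x(c:=t)) r) (x c)
       = Jm n Y (\<lambda>l. - (a l / (pv n Y I x l)^2)) I I' r c"
proof -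
  define D where "D l = - (a l / (pv n Y I x l)^2)" for l
  define P0 where "P0 l = pv n Y I x l" for l
  define V where "V l = pv n Y I (unit c) l" for l
  have xe: "x(c:=t) = (\<lambda>l. x l + (t - x c) * unit c l)" for t
    by (rule ext) (auto simp: unit_def)
  have pe: "pv n Y I (x(c:=t)) l = P0 l + (t - x c) * V l" for t l
    unfolding xe P0_def V_def by (rule pv_affine)
  have ev: "eventually (\<lambda>t. \<forall>l\<in>{..<n}. P0 l + (t - x c) * V l \<noteq> 0) (nhds (x c))"
  proof -
   have "\<forall>l\<in>{..<n}. eventually (\<lambda>t. P0 l + (t - x c) * V l \<noteq> 0) (nhds (x c))"
   proof
    fix l assume "l \<in> {..<n}"
    hence l: "l < n" by simp
    have "((\<lambda>t. P0 l + (t - x c) * V l) \<longlongrightarrow> P0 l + (x c - x c) * V l) (at (x c))"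
      by (intro tendsto_intros)
    hence "eventually (\<lambda>t. P0 l + (t - x c) * V l \<noteq> 0) (at (x c))"
      by (rule tendsto_imp_eventually_ne) (use nz[OF l] in \<open>simp add: P0_def\<close>)
    thus "eventually (\<lambda>t. P0 l + (t - x c) * V l \<noteq> 0) (nhds (x c))"
      unfolding eventually_nhds_conv_at using nz[OF l] by (simp add: P0_def)
   qed
   thus ?thesis by (simp add: eventually_ball_finite_distrib)
  qed
  define G where "G t = (if r \<in> I' then (\<Sum>m\<in>I. ((x(c:=t)) m - a m / (P0 m + (t - x c) * V m)) * ebas Y I m r)
      + a r / (P0 r + (t - x c) * V r) else P0 r + (t - x c) * V r)" for t
  have evG: "eventually (\<lambda>t. coord_change n a Y I I' (x(c:=t)) r = G t) (nhds (x c))"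
    using ev
  proof (rule eventually_mono)
    fix t assume t: "\<forall>l\<in>{..<n}. P0 l + (t - x c) * V l \<noteq> 0"
    have xv': "\<And>l. n \<le> l \<Longrightarrow> (x(c:=t)) l = 0" using xv c by auto
    have nz': "\<And>l. l < n \<Longrightarrow> pv n Y I (x(c:=t)) l \<noteq> 0" using t pe by auto
    have "coord_change n a Y I I' (x(c:=t)) r = coordI I' (Pt n Y a I (x(c:=t))) r"
      using THE_Pt[OF cs xv' nz', of a] by (simp add: coord_change_def)
    also have "\<dots> = G t"
      unfolding coordI_def Pt_def r_map_def q0f_def G_def pe using r by simp
    finally show "coord_change n a Y I I' (x(c:=t)) r = G t" .
  qed
  have nzI: "P0 m \<noteq> 0" if "m \<in> I" for m using nz that S_sub[OF cs] by (auto simp: P0_def)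
  have dG: "(G has_field_derivative Jm n Y D I I' r c) (at (x c))"
  proof (cases "r \<in> I'")
    case False
    have "Jm n Y D I I' r c = V r" using False by (simp add: Jm_def coordI_def Psi_def V_def)
    thus ?thesis using False unfolding G_def by (simp add: dlin)
  next
    case True
    have J: "Jm n Y D I I' r c = (\<Sum>m\<in>I. (unit c m - (- (a m / (P0 m)^2) * V m)) * ebas Y I m r)
        + (- (a r / (P0 r)^2) * V r)"
      using True by (simp add: Jm_def coordI_def Psi_def uv_def V_def D_def P0_def)
    have "((\<lambda>t. (\<Sum>m\<in>I. ((x(c:=t)) m - a m / (P0 m + (t - x c) * V m)) * ebas Y I m r)
      + a r / (P0 r + (t - x c) * V r)) has_field_derivative
      (\<Sum>m\<in>I. (unit c m - (- (a m / (P0 m)^2) * V m)) * ebas Y I m r)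
        + (- (a r / (P0 r)^2) * V r)) (at (x c))"
      by (intro DERIV_add DERIV_sum DERIV_cmult_right DERIV_diff dupd dinv)
        (use nzI nz r in \<open>auto simp: P0_def\<close>)
    thus ?thesis using True J unfolding G_def by simp
  qed
  have "((\<lambda>t. coord_change n a Y I I' (x(c:=t)) r) has_field_derivative Jm n Y D I I' r c) (at (x c))"
    using DERIV_cong_ev[OF refl evG refl] dG by simp
  thus ?thesis unfolding D_def by (rule DERIV_imp_deriv)
qed

end



theorem lemma4p3:
  fixes n k :: nat and b :: "nat \<Rightarrow> nat \<Rightarrow> complex" and a x :: "nat \<Rightarrow> complex"
    and I I' :: "nat set"
  assumes basis: "\<forall>c. (\<forall>j<n. (\<Sum>i<k. c i * b i j) = 0) \<longrightarrow> (\<forall>i<k. c i = 0)"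
    and a_nz: "\<forall>j<n. a j \<noteq> 0"
    and Y_q: "\<forall>j<n. \<exists>y\<in>Ysp n k b. y j \<noteq> 0"
    and Yperp_p: "\<forall>j<n. \<exists>p\<in>annih n (Ysp n k b). p j \<noteq> 0"
    and I: "I \<subseteq> {..<n}" "card I = k" "is_coord_system n (Ysp n k b) I"
    and I': "I' \<subseteq> {..<n}" "card I' = k" "is_coord_system n (Ysp n k b) I'"
    and x: "x \<in> coordI I ` Lset n a (Ysp n k b)"
  shows "jac n (coord_change n a (Ysp n k b) I I') x = (dminor k b I' / dminor k b I) ^ 2"
proof -
  interpret subsp n "Ysp n k b" by (rule Ysp_subsp)
  from x obtain z where z: "z \<in> Lset n a (Ysp n k b)" and xz: "x = coordI I z" by auto
  have xv: "\<And>l. n \<le> l \<Longrightarrow> x l = 0" and nz: "\<And>l. l < n \<Longrightarrow> pv n (Ysp n k b) I x l \<noteq> 0"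
    using Lset_coord[OF I(3) z xz[symmetric]] by auto
  define D where "D = (\<lambda>l. - (a l / (pv n (Ysp n k b) I x l)^2))"
  have J: "jac n (coord_change n a (Ysp n k b) I I') x = det (JM n (Ysp n k b) D I I')"
    unfolding jac_def JM_def D_def
    by (rule arg_cong[where f=det], rule eq_matI) (auto simp: deriv_entry[OF I(3) xv nz])
  have mc: "det (JM n (Ysp n k b) D I I') * (dminor k b I)^2 = (dminor k b I')^2"
  proof (rule main_chain[where d="dminor k b", OF I'(3)])
    fix J i j assume "is_coord_system n (Ysp n k b) J" "card J = card I'" "i \<in> J" "j < n" "j \<notin> J"
      "is_coord_system n (Ysp n k b) (insert j (J - {i}))"
    thus "(dminor k b (insert j (J - {i})))^2 = (ebas (Ysp n k b) J i j)^2 * (dminor k b J)^2"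
      using dminor_exchange[OF basis] I'(2) by auto
  qed (use I I' in auto)
  have dnz: "dminor k b I \<noteq> 0" by (rule dminor_nz[OF basis I(3) I(2)])
  show ?thesis using J mc dnz by (simp add: power_divide field_simps)
qed


end
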